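(* Let $R$ be a commutative ring with identity, let $S$ be a semigroup, and suppose $S=S_1\sqcup S_2$ is a disjoint union of subsets. Let $R\,S$ be the semigroup algebra of $S$ over $R$, and define the $R$-linear map $P:R\,S\to R\,S$ on the basis $S$ by $P(x)=x$ if $x\in S_1$ and $P(x)=0$ if $x\in S_2$. Then $(R\,S,P)$ is a Rota-Baxter algebra (of weight $-1$) if and only if $S_1$ and $S_2$ are subsemigroups of $S$.
   Context: A Rota-Baxter algebra (of weight $-1$) is an associative $R$-algebra $A$ with an $R$-linear operator $P:A\to A$ satisfying $P(x)P(y)=P(xP(y))+P(P(x)y)-P(xy)$ for all $x,y\in A$. A subsemigroup is a subset closed under the semigroup operation. *)

theory Defs
  imports Main
begin

text \<open>The semigroup algebra R S: elements are finitely supported functions S \<Rightarrow> R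
  (formal finite R-linear combinations of elements of S).\<close>

definition supp :: "('s \<Rightarrow> 'r::zero) \<Rightarrow> 's set" where
  "supp f = {x. f x \<noteq> 0}"

definition sgalg :: "('s \<Rightarrow> 'r::zero) set" where
  "sgalg = {f. finite (supp f)}"

definition sgmult :: "('s::semigroup_mult \<Rightarrow> 'r::comm_ring_1) \<Rightarrow> ('s \<Rightarrow> 'r) \<Rightarrow> ('s \<Rightarrow> 'r)" where
  "sgmult f g = (\<lambda>z. \<Sum>(x, y) \<in> {(x, y). x \<in> supp f \<and> y \<in> supp g \<and> x * y = z}. f x * g y)"

definition projP :: "'s set \<Rightarrow> ('s \<Rightarrow> 'r::zero) \<Rightarrow> ('s \<Rightarrow> 'r)" where
  "projP S1 f = (\<lambda>x. if x \<in> S1 then f x else 0)"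

definition rota_baxter_neg1 :: "(('s::semigroup_mult \<Rightarrow> 'r::comm_ring_1) \<Rightarrow> ('s \<Rightarrow> 'r)) \<Rightarrow> bool" where
  "rota_baxter_neg1 P \<longleftrightarrow>
     (\<forall>f\<in>sgalg. \<forall>g\<in>sgalg.
        sgmult (P f) (P g) = (\<lambda>z. P (sgmult f (P g)) z + P (sgmult (P f) g) z - P (sgmult f g) z))"

definition subsemigroup :: "'s::semigroup_mult set \<Rightarrow> bool" where
  "subsemigroup A \<longleftrightarrow> (\<forall>x\<in>A. \<forall>y\<in>A. x * y \<in> A)"

end

theory Submission
  imports Defs
begin

lemma sgmult_sum:
  fixes f g :: "'s::semigroup_mult \<Rightarrow> 'r::comm_ring_1"
  assumes A: "finite A" "supp f \<subseteq> A" and B: "finite B" "supp g \<subseteq> B"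
  shows "sgmult f g z = (\<Sum>x\<in>A. \<Sum>y\<in>B. if x * y = z then f x * g y else 0)"
proof -
  have fin: "finite (supp f \<times> supp g)" using A B finite_subset by blast
  have "sgmult f g z = (\<Sum>p \<in> {p \<in> supp f \<times> supp g. fst p * snd p = z}. f (fst p) * g (snd p))"
    unfolding sgmult_def by (rule sum.cong) auto
  also have "\<dots> = (\<Sum>p \<in> supp f \<times> supp g. if fst p * snd p = z then f (fst p) * g (snd p) else 0)"
    using fin by (simp add: sum.inter_filter)
  also have "\<dots> = (\<Sum>p \<in> A \<times> B. if fst p * snd p = z then f (fst p) * g (snd p) else 0)"
    apply (rule sum.mono_neutral_left)
    using A B by (auto simp: supp_def)
  also have "\<dots> = (\<Sum>x\<in>A. \<Sum>y\<in>B. if x * y = z then f x * g y else 0)"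
    by (simp add: sum.cartesian_product case_prod_beta)
  finally show ?thesis .
qed

lemma supp_projP: "supp (projP S1 f) \<subseteq> supp f"
  by (auto simp: supp_def projP_def)


lemma X:
  fixes S1 :: "'s::semigroup_mult set"
  assumes rb: "rota_baxter_neg1 (projP S1 :: ('s \<Rightarrow> 'r::comm_ring_1) \<Rightarrow> ('s \<Rightarrow> 'r))"
  shows "subsemigroup S1 \<and> subsemigroup (- S1)"
proof -
  define d :: "'s \<Rightarrow> 's \<Rightarrow> 'r" where "d x = (\<lambda>z. if z = x then 1 else 0)" for x
  have suppd: "supp (d x) \<subseteq> {x}" for x by (auto simp: supp_def d_def)
  have dalg: "d x \<in> sgalg" for x using suppd[of x] by (auto simp: sgalg_def intro: finite_subset)
  have m: "sgmult f g w = (if x * y = w then f x * g y else 0)"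
    if "supp f \<subseteq> {x}" "supp g \<subseteq> {y}" for f g :: "'s \<Rightarrow> 'r" and x y w
    using sgmult_sum[of "{x}" f "{y}" g w] that by simp
  have key: "sgmult (projP S1 (d x)) (projP S1 (d y)) (x*y) =
      projP S1 (sgmult (d x) (projP S1 (d y))) (x*y) + projP S1 (sgmult (projP S1 (d x)) (d y)) (x*y)
      - projP S1 (sgmult (d x) (d y)) (x*y)" for x y
    using rb dalg[of x] dalg[of y] unfolding rota_baxter_neg1_def by (drule_tac x="d x" in bspec) (auto dest!: bspec[where x="d y"] fun_cong[where x="x*y"])
  have sp: "supp (projP S1 (d x)) \<subseteq> {x}" for x using supp_projP[of S1 "d x"] suppd[of x] by (rule order_trans)
  have A: "x * y \<in> S1" if xy: "x \<in> S1" "y \<in> S1" for x y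
  proof (rule ccontr)
    assume n: "x * y \<notin> S1"
    have "sgmult (projP S1 (d x)) (projP S1 (d y)) (x*y) = 1"
      using m[OF sp sp] xy by (simp add: projP_def d_def)
    moreover have "projP S1 (sgmult (d x) (projP S1 (d y))) (x*y) = 0"
       "projP S1 (sgmult (projP S1 (d x)) (d y)) (x*y) = 0" "projP S1 (sgmult (d x) (d y)) (x*y) = 0"
      using n by (simp_all add: projP_def)
    ultimately show False using key[of x y] by simp
  qed
  have B: "x * y \<notin> S1" if xy: "x \<notin> S1" "y \<notin> S1" for x y
  proof
    assume n: "x * y \<in> S1"
    have "sgmult (projP S1 (d x)) (projP S1 (d y)) (x*y) = 0"
      using m[OF sp sp] xy by (simp add: projP_def d_def)
    moreover have "projP S1 (sgmult (d x) (projP S1 (d y))) (x*y) = 0"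
      using m[OF suppd sp, of x y "x*y"] xy by (simp add: projP_def d_def)
    moreover have "projP S1 (sgmult (projP S1 (d x)) (d y)) (x*y) = 0"
      using m[OF sp suppd, of x y "x*y"] xy by (simp add: projP_def d_def)
    moreover have "projP S1 (sgmult (d x) (d y)) (x*y) = 1"
      using m[OF suppd suppd, of x y "x*y"] n by (simp add: projP_def d_def)
    ultimately show False using key[of x y] by simp
  qed
  show ?thesis unfolding subsemigroup_def using A B by auto
qed

lemma Y:
  fixes S1 :: "'s::semigroup_mult set"
  assumes in1: "\<And>x y. x \<in> S1 \<Longrightarrow> y \<in> S1 \<Longrightarrow> x * y \<in> S1"
    and n1: "\<And>x y. x \<notin> S1 \<Longrightarrow> y \<notin> S1 \<Longrightarrow> x * y \<notin> S1"
  shows "rota_baxter_neg1 (projP S1 :: ('s \<Rightarrow> 'r::comm_ring_1) \<Rightarrow> ('s \<Rightarrow> 'r))"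
    unfolding rota_baxter_neg1_def
  proof (intro ballI ext)
    fix f g :: "'s \<Rightarrow> 'r" and z
    assume f: "f \<in> sgalg" and g: "g \<in> sgalg"
    have fA: "finite (supp f)" "finite (supp g)" using f g by (auto simp: sgalg_def)
    have pf: "supp (projP S1 f) \<subseteq> supp f" "supp (projP S1 g) \<subseteq> supp g" by (rule supp_projP)+
    have e1: "sgmult (projP S1 f) (projP S1 g) z = (\<Sum>x\<in>supp f. \<Sum>y\<in>supp g. if x * y = z then projP S1 f x * projP S1 g y else 0)"
      by (rule sgmult_sum[OF fA(1) pf(1) fA(2) pf(2)])
    have e2: "sgmult f (projP S1 g) z = (\<Sum>x\<in>supp f. \<Sum>y\<in>supp g. if x * y = z then f x * projP S1 g y else 0)"
      by (rule sgmult_sum[OF fA(1) order_refl fA(2) pf(2)])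
    have e3: "sgmult (projP S1 f) g z = (\<Sum>x\<in>supp f. \<Sum>y\<in>supp g. if x * y = z then projP S1 f x * g y else 0)"
      by (rule sgmult_sum[OF fA(1) pf(1) fA(2) order_refl])
    have e4: "sgmult f g z = (\<Sum>x\<in>supp f. \<Sum>y\<in>supp g. if x * y = z then f x * g y else 0)"
      by (rule sgmult_sum[OF fA(1) order_refl fA(2) order_refl])
    have tm: "(if x * y = z then projP S1 f x * projP S1 g y else 0) =
       (if z \<in> S1 then (if x * y = z then f x * projP S1 g y else 0)
         + (if x * y = z then projP S1 f x * g y else 0) - (if x * y = z then f x * g y else 0) else 0)"
      for x y
      using in1[of x y] n1[of x y] by (auto simp: projP_def)
    have "sgmult (projP S1 f) (projP S1 g) z = (if z \<in> S1 then sgmult f (projP S1 g) z + sgmult (projP S1 f) g z - sgmult f g z else 0)"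
      unfolding e1 e2 e3 e4 tm
      by (simp add: sum.distrib sum_subtractf)
    then show "sgmult (projP S1 f) (projP S1 g) z =
      projP S1 (sgmult f (projP S1 g)) z + projP S1 (sgmult (projP S1 f) g) z - projP S1 (sgmult f g) z"
      by (simp add: projP_def)
  qed

theorem corollary2p2:
  fixes S1 S2 :: "'s::semigroup_mult set"
  assumes "S1 \<inter> S2 = {}" and "S1 \<union> S2 = UNIV"
  shows "rota_baxter_neg1 (projP S1 :: ('s \<Rightarrow> 'r::comm_ring_1) \<Rightarrow> ('s \<Rightarrow> 'r))
           \<longleftrightarrow> subsemigroup S1 \<and> subsemigroup S2"
proof -
  have S2: "S2 = - S1" using assms by auto
  show ?thesis
  proof
    assume "rota_baxter_neg1 (projP S1 :: ('s \<Rightarrow> 'r::comm_ring_1) \<Rightarrow> ('s \<Rightarrow> 'r))"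
    from X[OF this] show "subsemigroup S1 \<and> subsemigroup S2" unfolding S2 .
  next
    assume "subsemigroup S1 \<and> subsemigroup S2"
    then show "rota_baxter_neg1 (projP S1 :: ('s \<Rightarrow> 'r::comm_ring_1) \<Rightarrow> ('s \<Rightarrow> 'r))"
      unfolding S2 subsemigroup_def by (intro Y) auto
  qed
qed

end
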